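(* a) For all $k' \in \mathbf{N}$ and all $k \in \mathbf{N}_-$, $$\hat{\sigma}^{k'}(\hat{\Phi}^\alpha(\mu, \cdot))(k) = \hat{\Phi}^{\hat{\sigma}^{k'}(\alpha)}(\hat{\Phi}^\alpha(\mu, k'-1), k).$$ b) For all $t' \in \mathbf{R}$ and all $t \in \mathbf{R}$, $$\sigma^{t'}(\Phi^\rho(\mu, \cdot))(t) = \Phi^{\sigma^{t'}(\rho)}(\Phi^\rho(\mu, t'-0), t).$$
   Context: Let $\mathbf{B}=\{0,1\}$ with the discrete topology, $\mathbf{N}_-=\{-1,0,1,\dots\}$, and let a function $\Phi:\mathbf{B}^n\to\mathbf{B}^n$ and an initial state $\mu\in\mathbf{B}^n$ be given. For $\lambda\in\mathbf{B}^n$, $\Phi^\lambda:\mathbf{B}^n\to\mathbf{B}^n$ is defined by $\Phi^\lambda_i(\mu)=\Phi_i(\mu)$ if $\lambda_i=1$ and $\Phi^\lambda_i(\mu)=\mu_i$ if $\lambda_i=0$; for $\alpha^0,\dots,\alpha^{k+1}\in\mathbf{B}^n$ one sets iteratively $\Phi^{\alpha^0\dots\alpha^{k}\alpha^{k+1}}(\mu)=\Phi^{\alpha^{k+1}}(\Phi^{\alpha^0\dots\alpha^k}(\mu))$. Discrete time: a computation function is a sequence $\alpha:\mathbf{N}\to\mathbf{B}^n$ (write $\alpha^k=\alpha(k)$); it is progressive if for every $i\in\{1,\dots,n\}$ the set $\{k\in\mathbf{N}\mid \alpha_i^k=1\}$ is infinite. Let $\alpha$ be progressive. The discrete time flow is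 $\hat{\Phi}^\alpha(\mu,-1)=\mu$ and $\hat{\Phi}^\alpha(\mu,k)=\Phi^{\alpha^0\dots\alpha^k}(\mu)$ for $k\ge 0$. For $k'\in\mathbf{N}$ the forgetful functions are $\hat{\sigma}^{k'}(\hat{x})(k)=\hat{x}(k+k')$ for signals $\hat{x}:\mathbf{N}_-\to\mathbf{B}^n$, and $(\hat{\sigma}^{k'}(\alpha))^k=\alpha^{k+k'}$ for computation functions. Real time: $(t_k)_{k\in\mathbf{N}}$ is a strictly increasing real sequence unbounded from above, and $\rho:\mathbf{R}\to\mathbf{B}^n$ is $\rho(t)=\alpha^0\chi_{\{t_0\}}(t)\oplus\alpha^1\chi_{\{t_1\}}(t)\oplus\dots\oplus\alpha^k\chi_{\{t_k\}}(t)\oplus\dots$, where $\chi_A$ is the characteristic function of $A\subset\mathbf{R}$ and $\alpha$ is the progressive sequence above (so for each $i$ the set $\{t\mid\rho_i(t)=1\}$ is unbounded from above). The real time flow is $\Phi^\rho(\mu,t)=\hat{\Phi}^\alpha(\mu,-1)\chi_{(-\infty,t_0)}(t)\oplus\hat{\Phi}^\alpha(\mu,0)\chi_{[t_0,t_1)}(t)\oplus\dots\oplus\hat{\Phi}^\alpha(\mu,k)\chi_{[t_k,t_{k+1})}(t)\oplus\dots$ (and similarly for any other function of this form in place of $\rho$). For a piecewise constant signal $x:\mathbf{R}\to\mathbf{B}^n$ of this kind, $x(t-0)$ denotes its left limit at $t$ (the value taken by $x$ on some interval $(t-\varepsilon,t)$). For $t'\in\mathbf{R}$ the forgetful functions are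 $\sigma^{t'}(x)(t)=x(t)$ if $t\ge t'$ and $\sigma^{t'}(x)(t)=x(t'-0)$ if $t<t'$, and $\sigma^{t'}(\rho)(t)=\rho(t)\cdot\chi_{[t',\infty)}(t)$. *)

theory Defs
  imports Main "HOL.Real"
begin

text \<open>States in B^n are modelled as functions 'n \<Rightarrow> bool, 'n a finite index type (n = CARD('n)).\<close>

definition upd :: "(('n \<Rightarrow> bool) \<Rightarrow> ('n \<Rightarrow> bool)) \<Rightarrow> ('n \<Rightarrow> bool) \<Rightarrow> ('n \<Rightarrow> bool) \<Rightarrow> ('n \<Rightarrow> bool)"
  where "upd \<Phi> lam \<mu> = (\<lambda>i. if lam i then \<Phi> \<mu> i else \<mu> i)"

fun iter :: "(('n \<Rightarrow> bool) \<Rightarrow> ('n \<Rightarrow> bool)) \<Rightarrow> (nat \<Rightarrow> 'n \<Rightarrow> bool) \<Rightarrow> ('n \<Rightarrow> bool) \<Rightarrow> nat \<Rightarrow> ('n \<Rightarrow> bool)"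
  where "iter \<Phi> \<alpha> \<mu> 0 = \<mu>"
  | "iter \<Phi> \<alpha> \<mu> (Suc m) = upd \<Phi> (\<alpha> m) (iter \<Phi> \<alpha> \<mu> m)"

definition progressive :: "(nat \<Rightarrow> 'n \<Rightarrow> bool) \<Rightarrow> bool"
  where "progressive \<alpha> \<longleftrightarrow> (\<forall>i. infinite {k. \<alpha> k i})"

text \<open>Discrete time flow on N_- = {-1,0,1,...} (int k with k \<ge> -1):
  dflow (-1) = mu, dflow k = Phi^{alpha^0...alpha^k}(mu) for k \<ge> 0.\<close>
definition dflow :: "(('n \<Rightarrow> bool) \<Rightarrow> ('n \<Rightarrow> bool)) \<Rightarrow> (nat \<Rightarrow> 'n \<Rightarrow> bool) \<Rightarrow> ('n \<Rightarrow> bool) \<Rightarrow> int \<Rightarrow> ('n \<Rightarrow> bool)"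
  where "dflow \<Phi> \<alpha> \<mu> k = iter \<Phi> \<alpha> \<mu> (nat (k + 1))"

definition sigd :: "nat \<Rightarrow> (int \<Rightarrow> 'a) \<Rightarrow> int \<Rightarrow> 'a"
  where "sigd k' x k = x (k + int k')"

definition sigd_alpha :: "nat \<Rightarrow> (nat \<Rightarrow> 'a) \<Rightarrow> nat \<Rightarrow> 'a"
  where "sigd_alpha k' \<alpha> k = \<alpha> (k + k')"

text \<open>Real time: rho = sum_k alpha^k chi_{t_k}.\<close>
definition rho_of :: "(nat \<Rightarrow> real) \<Rightarrow> (nat \<Rightarrow> 'n \<Rightarrow> bool) \<Rightarrow> real \<Rightarrow> 'n \<Rightarrow> bool"
  where "rho_of ts \<alpha> t = (if \<exists>k. ts k = t then \<alpha> (THE k. ts k = t) else (\<lambda>_. False))"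

definition is_rep :: "(real \<Rightarrow> 'n \<Rightarrow> bool) \<Rightarrow> (nat \<Rightarrow> real) \<Rightarrow> (nat \<Rightarrow> 'n \<Rightarrow> bool) \<Rightarrow> bool"
  where "is_rep \<rho> ts \<alpha> \<longleftrightarrow> strict_mono ts \<and> (\<forall>M. \<exists>k. M < ts k) \<and> \<rho> = rho_of ts \<alpha>"

definition rflow_rep :: "(('n \<Rightarrow> bool) \<Rightarrow> ('n \<Rightarrow> bool)) \<Rightarrow> (nat \<Rightarrow> real) \<Rightarrow> (nat \<Rightarrow> 'n \<Rightarrow> bool) \<Rightarrow> ('n \<Rightarrow> bool) \<Rightarrow> real \<Rightarrow> ('n \<Rightarrow> bool)"
  where "rflow_rep \<Phi> ts \<alpha> \<mu> t =
    (if t < ts 0 then \<mu> else dflow \<Phi> \<alpha> \<mu> (int (THE k. ts k \<le> t \<and> t < ts (Suc k))))"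

definition rflow :: "(('n \<Rightarrow> bool) \<Rightarrow> ('n \<Rightarrow> bool)) \<Rightarrow> (real \<Rightarrow> 'n \<Rightarrow> bool) \<Rightarrow> ('n \<Rightarrow> bool) \<Rightarrow> real \<Rightarrow> ('n \<Rightarrow> bool)"
  where "rflow \<Phi> \<rho> \<mu> t =
    (let p = (SOME p. is_rep \<rho> (fst p) (snd p)) in rflow_rep \<Phi> (fst p) (snd p) \<mu> t)"

definition left_lim :: "(real \<Rightarrow> 'a) \<Rightarrow> real \<Rightarrow> 'a"
  where "left_lim x t = (THE v. \<exists>e>0. \<forall>s. t - e < s \<and> s < t \<longrightarrow> x s = v)"

definition sigr :: "real \<Rightarrow> (real \<Rightarrow> 'a) \<Rightarrow> real \<Rightarrow> 'a"
  where "sigr t' x t = (if t' \<le> t then x t else left_lim x t')"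

definition sigr_rho :: "real \<Rightarrow> (real \<Rightarrow> 'n \<Rightarrow> bool) \<Rightarrow> real \<Rightarrow> 'n \<Rightarrow> bool"
  where "sigr_rho t' \<rho> t = (if t' \<le> t then \<rho> t else (\<lambda>_. False))"

end

theory Submission
  imports Defs
begin

lemma iter_add: "iter \<Phi> \<alpha> \<mu> (m + k') = iter \<Phi> (sigd_alpha k' \<alpha>) (iter \<Phi> \<alpha> \<mu> k') m"
  by (induction m) (simp_all add: sigd_alpha_def add.commute)

definition stepf :: "(('n \<Rightarrow> bool) \<Rightarrow> ('n \<Rightarrow> bool)) \<Rightarrow> (real \<Rightarrow> 'n \<Rightarrow> bool) \<Rightarrow> ('n \<Rightarrow> bool) \<Rightarrow> real \<Rightarrow> ('n \<Rightarrow> bool)"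
  where "stepf \<Phi> \<rho> st s = upd \<Phi> (\<rho> s) st"

definition Zs :: "(real \<Rightarrow> 'n \<Rightarrow> bool) \<Rightarrow> real \<Rightarrow> real set"
  where "Zs \<rho> t = {s. s \<le> t \<and> \<rho> s \<noteq> (\<lambda>_. False)}"

definition G :: "(('n \<Rightarrow> bool) \<Rightarrow> ('n \<Rightarrow> bool)) \<Rightarrow> (real \<Rightarrow> 'n \<Rightarrow> bool) \<Rightarrow> ('n \<Rightarrow> bool) \<Rightarrow> real \<Rightarrow> ('n \<Rightarrow> bool)"
  where "G \<Phi> \<rho> \<mu> t = foldl (stepf \<Phi> \<rho>) \<mu> (sorted_list_of_set (Zs \<rho> t))"

lemma iter_foldl: "iter \<Phi> \<alpha> \<mu> n = foldl (\<lambda>st k. upd \<Phi> (\<alpha> k) st) \<mu> [0..<n]"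
  by (induction n) simp_all

lemma rho_of_ts: assumes "strict_mono ts" shows "rho_of ts \<alpha> (ts k) = \<alpha> k"
proof -
  have "(THE j. ts j = ts k) = k"
    using strict_mono_eq[OF assms] by (intro the_equality) auto
  then show ?thesis unfolding rho_of_def by auto
qed

lemma foldl_filter:
  assumes "\<And>s st. \<not> P s \<Longrightarrow> f st s = st"
  shows "foldl f st xs = foldl f st (filter P xs)"
  using assms by (induction xs arbitrary: st) auto

lemma upd_False: "upd \<Phi> (\<lambda>_. False) st = st"
  by (simp add: upd_def)

lemma rep_n:
  assumes mono: "strict_mono ts" and unbdd: "\<forall>M. \<exists>k. M < ts k"
  shows "\<exists>n. {k. ts k \<le> t} = {..<n} \<and> rflow_rep \<Phi> ts \<alpha> \<mu> t = iter \<Phi> \<alpha> \<mu> n"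
proof (cases "t < ts 0")
  case True
  have "{k. ts k \<le> t} = {}"
  proof -
    have "ts 0 \<le> ts k" for k using mono by (simp add: strict_mono_less_eq)
    then show ?thesis using True by (metis (mono_tags, lifting) Collect_empty_eq leD order_trans)
  qed
  then show ?thesis using True by (intro exI[of _ 0]) (simp add: rflow_rep_def)
next
  case False
  obtain K where K: "t < ts K" using unbdd by blast
  define S where "S = {k. ts k \<le> t}"
  have SK: "S \<subseteq> {..<K}"
  proof
    fix k assume "k \<in> S"
    then have "ts k < ts K" using K by (auto simp: S_def)
    then show "k \<in> {..<K}" using mono by (simp add: strict_mono_less)
  qed
  have fin: "finite S" using SK finite_subset by blast
  have ne: "0 \<in> S" using False by (simp add: S_def)
  define k where "k = Max S"
  have kS: "k \<in> S" using fin ne k_def Max_in by blast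
  have down: "j \<in> S" if "j \<le> k" for j
  proof -
    have "ts j \<le> ts k" using that mono by (simp add: strict_mono_less_eq)
    then show ?thesis using kS by (simp add: S_def)
  qed
  have Sk: "S = {..<Suc k}"
  proof
    show "S \<subseteq> {..<Suc k}" using fin k_def by (auto simp: less_Suc_eq_le)
    show "{..<Suc k} \<subseteq> S" using down by (auto simp: less_Suc_eq_le)
  qed
  have tk: "ts k \<le> t" using kS by (simp add: S_def)
  have tk1: "t < ts (Suc k)" using Sk by (force simp: S_def)
  have the: "(THE j. ts j \<le> t \<and> t < ts (Suc j)) = k"
  proof (rule the_equality)
    show "ts k \<le> t \<and> t < ts (Suc k)" using tk tk1 by simp
  next
    fix j assume j: "ts j \<le> t \<and> t < ts (Suc j)"
    then have "j \<in> S" by (simp add: S_def)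
    then have "j \<le> k" using Sk by simp
    moreover have "\<not> j < k"
    proof
      assume "j < k" then have "Suc j \<le> k" by simp
      then have "ts (Suc j) \<le> ts k" using mono by (simp add: strict_mono_less_eq)
      then show False using j tk by simp
    qed
    ultimately show "j = k" by simp
  qed
  have nk: "nat (int k + 1) = Suc k" by simp
  have "rflow_rep \<Phi> ts \<alpha> \<mu> t = iter \<Phi> \<alpha> \<mu> (Suc k)"
    unfolding rflow_rep_def dflow_def using False the nk by simp
  moreover have "{k. ts k \<le> t} = {..<Suc k}" using Sk by (simp only: S_def)
  ultimately show ?thesis by (intro exI[of _ "Suc k"] conjI)
qed

lemma sorted_map_ts: assumes "strict_mono ts" shows "sorted (map ts [0..<n])"
  unfolding sorted_wrt_map
  by (rule sorted_wrt_mono_rel[OF _ sorted_wrt_upt[of 0 n]])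
     (simp add: strict_mono_less_eq[OF assms])

lemma rep_G:
  assumes mono: "strict_mono ts" and unbdd: "\<forall>M. \<exists>k. M < ts k"
  shows "rflow_rep \<Phi> ts \<alpha> \<mu> t = G \<Phi> (rho_of ts \<alpha>) \<mu> t"
proof -
  let ?\<rho> = "rho_of ts \<alpha>"
  obtain n where n: "{k. ts k \<le> t} = {..<n}" and r: "rflow_rep \<Phi> ts \<alpha> \<mu> t = iter \<Phi> \<alpha> \<mu> n"
    using rep_n[OF mono unbdd, of t \<Phi> \<alpha> \<mu>] by (elim exE conjE)
  let ?xs = "map ts [0..<n]"
  have "iter \<Phi> \<alpha> \<mu> n = foldl (stepf \<Phi> ?\<rho>) \<mu> ?xs"
    unfolding iter_foldl foldl_map stepf_def by (simp add: rho_of_ts[OF mono])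
  also have "\<dots> = foldl (stepf \<Phi> ?\<rho>) \<mu> (filter (\<lambda>s. ?\<rho> s \<noteq> (\<lambda>_. False)) ?xs)"
    by (rule foldl_filter) (auto simp: stepf_def upd_False)
  also have "filter (\<lambda>s. ?\<rho> s \<noteq> (\<lambda>_. False)) ?xs = sorted_list_of_set (Zs ?\<rho> t)"
  proof -
    have inj: "inj ts" using mono strict_mono_imp_inj_on by blast
    have d: "distinct (filter (\<lambda>s. ?\<rho> s \<noteq> (\<lambda>_. False)) ?xs)"
      using inj by (simp add: distinct_map inj_on_def)
    have s: "sorted (filter (\<lambda>s. ?\<rho> s \<noteq> (\<lambda>_. False)) ?xs)"
      by (rule sorted_wrt_filter[OF sorted_map_ts[OF mono]])
    have "set (filter (\<lambda>s. ?\<rho> s \<noteq> (\<lambda>_. False)) ?xs) = Zs ?\<rho> t"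
    proof
      show "set (filter (\<lambda>s. ?\<rho> s \<noteq> (\<lambda>_. False)) ?xs) \<subseteq> Zs ?\<rho> t"
      proof
        fix s assume "s \<in> set (filter (\<lambda>s. ?\<rho> s \<noteq> (\<lambda>_. False)) ?xs)"
        then obtain k where k: "k < n" "s = ts k" "?\<rho> s \<noteq> (\<lambda>_. False)" by auto
        have "k \<in> {k. ts k \<le> t}" unfolding n using k(1) by simp
        then show "s \<in> Zs ?\<rho> t" using k unfolding Zs_def by simp
      qed
      show "Zs ?\<rho> t \<subseteq> set (filter (\<lambda>s. ?\<rho> s \<noteq> (\<lambda>_. False)) ?xs)"
      proof
        fix s assume "s \<in> Zs ?\<rho> t"
        then have s1: "s \<le> t" and s2: "?\<rho> s \<noteq> (\<lambda>_. False)" by (auto simp: Zs_def)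
        then obtain k where ks: "ts k = s" unfolding rho_of_def by (auto split: if_splits)
        have "k \<in> {k. ts k \<le> t}" using ks s1 by simp
        then have "k < n" unfolding n by simp
        then show "s \<in> set (filter (\<lambda>s. ?\<rho> s \<noteq> (\<lambda>_. False)) ?xs)"
          using ks s2 by auto
      qed
    qed
    then show ?thesis using sorted_list_of_set.idem_if_sorted_distinct[OF s d] by simp
  qed
  finally show ?thesis using r by (simp add: G_def)
qed


lemma rflow_G:
  assumes "\<exists>p. is_rep \<rho> (fst p) (snd p)"
  shows "rflow \<Phi> \<rho> \<mu> t = G \<Phi> \<rho> \<mu> t"
proof -
  define p where "p = (SOME p. is_rep \<rho> (fst p) (snd p))"
  have "is_rep \<rho> (fst p) (snd p)" unfolding p_def using someI_ex[OF assms] .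
  then have m: "strict_mono (fst p)" and u: "\<forall>M. \<exists>k. M < fst p k" and r: "\<rho> = rho_of (fst p) (snd p)"
    unfolding is_rep_def by auto
  have "rflow \<Phi> \<rho> \<mu> t = rflow_rep \<Phi> (fst p) (snd p) \<mu> t"
    unfolding rflow_def p_def[symmetric] Let_def ..
  also have "\<dots> = G \<Phi> \<rho> \<mu> t" using rep_G[OF m u] r by simp
  finally show ?thesis .
qed

lemma finite_Zs:
  assumes mono: "strict_mono ts" and unbdd: "\<forall>M. \<exists>k. M < ts k"
  shows "finite (Zs (rho_of ts \<alpha>) t)"
proof -
  obtain n where n: "{k. ts k \<le> t} = {..<n}"
    using rep_n[OF mono unbdd, of t undefined \<alpha> undefined] by (elim exE conjE)
  have "Zs (rho_of ts \<alpha>) t \<subseteq> ts ` {..<n}"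
  proof
    fix s assume "s \<in> Zs (rho_of ts \<alpha>) t"
    then have s1: "s \<le> t" and s2: "rho_of ts \<alpha> s \<noteq> (\<lambda>_. False)" by (auto simp: Zs_def)
    then obtain k where ks: "ts k = s" unfolding rho_of_def by (auto split: if_splits)
    have "k \<in> {k. ts k \<le> t}" using ks s1 by simp
    then have "k \<in> {..<n}" unfolding n .
    then show "s \<in> ts ` {..<n}" using ks by blast
  qed
  then show ?thesis using finite_subset by blast
qed

lemma sigr_rep:
  assumes mono: "strict_mono ts"
  shows "sigr_rho t' (rho_of ts \<alpha>) = rho_of ts (\<lambda>k. if t' \<le> ts k then \<alpha> k else (\<lambda>_. False))"
proof
  fix t
  show "sigr_rho t' (rho_of ts \<alpha>) t = rho_of ts (\<lambda>k. if t' \<le> ts k then \<alpha> k else (\<lambda>_. False)) t"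
  proof (cases "\<exists>k. ts k = t")
    case True
    then obtain k where k: "ts k = t" by blast
    have e: "rho_of ts \<beta> t = \<beta> k" for \<beta> using rho_of_ts[OF mono, of \<beta> k] k by simp
    show ?thesis unfolding e sigr_rho_def using k by simp
  next
    case False
    then show ?thesis by (simp add: sigr_rho_def rho_of_def)
  qed
qed

lemma sorted_union:
  fixes A B :: "real set"
  assumes "finite A" "finite B" "\<forall>a\<in>A. \<forall>b\<in>B. a < b"
  shows "sorted_list_of_set (A \<union> B) = sorted_list_of_set A @ sorted_list_of_set B"
proof -
  let ?xs = "sorted_list_of_set A @ sorted_list_of_set B"
  have "sorted ?xs" using assms by (auto simp: sorted_append less_imp_le)
  moreover have "distinct ?xs" using assms by (auto simp: distinct_append)
  moreover have "set ?xs = A \<union> B" using assms by simp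
  ultimately show ?thesis using sorted_list_of_set.idem_if_sorted_distinct by metis
qed


lemma G_left:
  assumes fin: "finite (Zs \<rho> t')"
  shows "left_lim (G \<Phi> \<rho> \<mu>) t' = foldl (stepf \<Phi> \<rho>) \<mu> (sorted_list_of_set {s \<in> Zs \<rho> t'. s < t'})"
proof -
  define A where "A = {s \<in> Zs \<rho> t'. s < t'}"
  define L where "L = foldl (stepf \<Phi> \<rho>) \<mu> (sorted_list_of_set A)"
  have finA: "finite A" using fin unfolding A_def by simp
  define e :: real where "e = (if A = {} then 1 else t' - Max A)"
  have epos: "e > 0"
  proof (cases "A = {}")
    case False
    then have "Max A \<in> A" using finA Max_in by blast
    then have "Max A < t'" unfolding A_def by simp
    then show ?thesis using False unfolding e_def by simp
  qed (simp add: e_def)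
  have key: "Zs \<rho> s = A" if s: "t' - e < s" "s < t'" for s
  proof
    show "Zs \<rho> s \<subseteq> A"
    proof
      fix x assume "x \<in> Zs \<rho> s"
      then show "x \<in> A" using s unfolding Zs_def A_def by simp
    qed
    show "A \<subseteq> Zs \<rho> s"
    proof
      fix x assume x: "x \<in> A"
      then have ne: "A \<noteq> {}" by blast
      have "x \<le> Max A" using finA x by simp
      also have "Max A = t' - e" using ne unfolding e_def by simp
      finally have "x \<le> s" using s by simp
      then show "x \<in> Zs \<rho> s" using x unfolding A_def Zs_def by simp
    qed
  qed
  have P: "\<forall>s. t' - e < s \<and> s < t' \<longrightarrow> G \<Phi> \<rho> \<mu> s = L"
    using key unfolding G_def L_def by simp
  have "left_lim (G \<Phi> \<rho> \<mu>) t' = L"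
    unfolding left_lim_def
  proof (rule the_equality)
    show "\<exists>e>0. \<forall>s. t' - e < s \<and> s < t' \<longrightarrow> G \<Phi> \<rho> \<mu> s = L" using P epos by blast
  next
    fix v assume "\<exists>e>0. \<forall>s. t' - e < s \<and> s < t' \<longrightarrow> G \<Phi> \<rho> \<mu> s = v"
    then obtain e' where e': "e' > 0" "\<forall>s. t' - e' < s \<and> s < t' \<longrightarrow> G \<Phi> \<rho> \<mu> s = v" by blast
    define s where "s = t' - min e e' / 2"
    have "t' - e < s" "t' - e' < s" "s < t'" using epos e'(1) unfolding s_def by auto
    then have "G \<Phi> \<rho> \<mu> s = v" "G \<Phi> \<rho> \<mu> s = L" using P e'(2) by auto
    then show "v = L" by simp
  qed
  then show ?thesis unfolding L_def A_def .
qed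


theorem theorem29:
  fixes \<Phi> :: "('n::finite \<Rightarrow> bool) \<Rightarrow> ('n \<Rightarrow> bool)"
    and \<mu> :: "'n \<Rightarrow> bool"
    and \<alpha> :: "nat \<Rightarrow> 'n \<Rightarrow> bool"
    and ts :: "nat \<Rightarrow> real"
    and \<rho> :: "real \<Rightarrow> 'n \<Rightarrow> bool"
  assumes prog: "progressive \<alpha>"
    and mono: "strict_mono ts"
    and unbdd: "\<forall>M. \<exists>k. M < ts k"
    and rho: "\<rho> = rho_of ts \<alpha>"
  shows "(\<forall>k'::nat. \<forall>k::int. k \<ge> -1 \<longrightarrow>
            sigd k' (dflow \<Phi> \<alpha> \<mu>) k
              = dflow \<Phi> (sigd_alpha k' \<alpha>) (dflow \<Phi> \<alpha> \<mu> (int k' - 1)) k)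
       \<and> (\<forall>t'::real. \<forall>t::real.
            sigr t' (rflow \<Phi> \<rho> \<mu>) t
              = rflow \<Phi> (sigr_rho t' \<rho>) (left_lim (rflow \<Phi> \<rho> \<mu>) t') t)"
proof (intro conjI allI impI)
  fix k' :: nat and k :: int
  assume k: "k \<ge> -1"
  have e1: "nat (k + int k' + 1) = nat (k + 1) + k'" using k by simp
  have e2: "nat (int k' - 1 + 1) = k'" by simp
  show "sigd k' (dflow \<Phi> \<alpha> \<mu>) k
              = dflow \<Phi> (sigd_alpha k' \<alpha>) (dflow \<Phi> \<alpha> \<mu> (int k' - 1)) k"
    unfolding sigd_def dflow_def e2 by (simp only: e1 iter_add)
next
  fix t' t :: real
  let ?\<rho>2 = "sigr_rho t' \<rho>"
  have rep1: "\<exists>p. is_rep \<rho> (fst p) (snd p)"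
    using mono unbdd rho by (intro exI[of _ "(ts, \<alpha>)"]) (simp add: is_rep_def)
  have rep2: "\<exists>p. is_rep ?\<rho>2 (fst p) (snd p)"
    using mono unbdd sigr_rep[OF mono, of t' \<alpha>] rho
    by (intro exI[of _ "(ts, \<lambda>k. if t' \<le> ts k then \<alpha> k else (\<lambda>_. False))"]) (simp add: is_rep_def)
  have rf: "rflow \<Phi> \<rho> \<mu> = G \<Phi> \<rho> \<mu>" using rflow_G[OF rep1] by blast
  have fin: "finite (Zs \<rho> x)" for x using finite_Zs[OF mono unbdd] rho by simp
  define A where "A = {s \<in> Zs \<rho> t'. s < t'}"
  define L where "L = foldl (stepf \<Phi> \<rho>) \<mu> (sorted_list_of_set A)"
  have LL: "left_lim (rflow \<Phi> \<rho> \<mu>) t' = L"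
    unfolding rf L_def A_def by (rule G_left[OF fin])
  have R: "rflow \<Phi> ?\<rho>2 L t = G \<Phi> ?\<rho>2 L t" by (rule rflow_G[OF rep2])
  show "sigr t' (rflow \<Phi> \<rho> \<mu>) t = rflow \<Phi> ?\<rho>2 (left_lim (rflow \<Phi> \<rho> \<mu>) t') t"
  proof (cases "t' \<le> t")
    case False
    have "Zs ?\<rho>2 t = {}" using False unfolding Zs_def sigr_rho_def by auto
    then show ?thesis using False unfolding LL R sigr_def G_def by simp
  next
    case True
    define B where "B = Zs ?\<rho>2 t"
    have ZU: "Zs \<rho> t = A \<union> B"
    proof
      show "Zs \<rho> t \<subseteq> A \<union> B"
      proof
        fix x assume x: "x \<in> Zs \<rho> t"
        show "x \<in> A \<union> B"
        proof (cases "x < t'")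
          case True then show ?thesis using x unfolding A_def B_def Zs_def by simp
        next
          case False then show ?thesis using x unfolding A_def B_def Zs_def sigr_rho_def by simp
        qed
      qed
      show "A \<union> B \<subseteq> Zs \<rho> t"
      proof
        fix x assume "x \<in> A \<union> B"
        then show "x \<in> Zs \<rho> t" using True unfolding A_def B_def Zs_def sigr_rho_def
          by (auto split: if_splits)
      qed
    qed
    have finA: "finite A" using fin[of t'] unfolding A_def by simp
    have finB: "finite B" using fin[of t] ZU by simp
    have sep: "\<forall>a\<in>A. \<forall>b\<in>B. a < b"
    proof (intro ballI)
      fix a b assume "a \<in> A" "b \<in> B"
      then have "a < t'" "t' \<le> b" unfolding A_def B_def Zs_def sigr_rho_def
        by (auto split: if_splits)
      then show "a < b" by simp
    qed
    have "G \<Phi> \<rho> \<mu> t = foldl (stepf \<Phi> \<rho>) L (sorted_list_of_set B)"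
      unfolding G_def ZU sorted_union[OF finA finB sep] L_def by simp
    also have "\<dots> = foldl (stepf \<Phi> ?\<rho>2) L (sorted_list_of_set B)"
    proof (rule foldl_cong)
      fix st x assume "x \<in> set (sorted_list_of_set B)"
      then have "x \<in> B" using finB by simp
      then have "t' \<le> x" unfolding B_def Zs_def sigr_rho_def by (auto split: if_splits)
      then show "stepf \<Phi> \<rho> st x = stepf \<Phi> ?\<rho>2 st x" unfolding stepf_def sigr_rho_def by simp
    qed simp_all
    finally have X: "G \<Phi> \<rho> \<mu> t = G \<Phi> ?\<rho>2 L t" unfolding G_def[of _ ?\<rho>2] B_def .
    have "sigr t' (rflow \<Phi> \<rho> \<mu>) t = G \<Phi> \<rho> \<mu> t" using True unfolding sigr_def rf by simp
    also have "\<dots> = rflow \<Phi> ?\<rho>2 (left_lim (rflow \<Phi> \<rho> \<mu>) t') t" unfolding LL R X ..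
    finally show ?thesis .
  qed
qed

end
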